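(* Let $a\in A^\pm_{p|q}$ be homogeneous of degree $g\in\mathbb{Z}^n$ with respect to the $\mathbb{Z}^n$-grading. If $a^\ast a=0$, then $a=0$.
   Context: $\Bbbk$ is an algebraically closed field of characteristic $0$. Fix integers $p,q\ge 0$, put $n=p+q$, and fix a sign $\pm\in\{+,-\}$. Set $p(i)=0$ for $1\le i\le p$ and $p(i)=1$ for $p<i\le n$. The Clifford/Weyl superalgebra $A^\pm_{p|q}$ is the associative unital superalgebra over $\Bbbk$ generated by $x_i,\partial_i$ ($1\le i\le n$), where $x_i,\partial_i$ have parity $p(i)$, subject to the relations $[\partial_i,x_j]_\pm=\delta_{ij}$, $[x_i,x_j]_\pm=0$, $[\partial_i,\partial_j]_\pm=0$ for all $i,j$, where for homogeneous $a,b$ one sets $[a,b]_\pm=ab\pm(-1)^{p(a)p(b)}ba$. $A^\pm_{p|q}$ is $\mathbb{Z}^n$-graded by $\deg x_i=\mathbf{e}_i$, $\deg\partial_i=-\mathbf{e}_i$. The map $\ast$ is the unique $\Bbbk$-linear map $A^\pm_{p|q}\to A^\pm_{p|q}$ with $(ab)^\ast=b^\ast a^\ast$, $(a^\ast)^\ast=a$, $x_i^\ast=\partial_i$, $\partial_i^\ast=x_i$. *)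

theory Defs
  imports "HOL-Computational_Algebra.Polynomial"
begin

text \<open>Generators x_i (X i) and partial_i (D i), indices 1..n.
 The free associative algebra k<gens> is modelled by coefficient functions
 on words (lists of generators); elements of the free algebra are those with
 finite support.\<close>

datatype gen = X nat | D nat

type_synonym 'k fa = "gen list \<Rightarrow> 'k"

definition alg_closed :: "'k::field itself \<Rightarrow> bool" where
  "alg_closed _ \<longleftrightarrow> (\<forall>P::'k poly. degree P > 0 \<longrightarrow> (\<exists>z. poly P z = 0))"

definition fa_finite :: "'k::zero fa \<Rightarrow> bool" where
  "fa_finite f \<longleftrightarrow> finite {w. f w \<noteq> 0}"

definition fa_mult :: "'k::comm_ring_1 fa \<Rightarrow> 'k fa \<Rightarrow> 'k fa" where
  "fa_mult f g = (\<lambda>w. \<Sum>k\<le>length w. f (take k w) * g (drop k w))"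

definition fa_mono :: "gen list \<Rightarrow> 'k::comm_ring_1 fa" where
  "fa_mono u = (\<lambda>w. if w = u then 1 else 0)"

definition fa_add :: "'k::comm_ring_1 fa \<Rightarrow> 'k fa \<Rightarrow> 'k fa" where
  "fa_add f g = (\<lambda>w. f w + g w)"

definition fa_smult :: "'k::comm_ring_1 \<Rightarrow> 'k fa \<Rightarrow> 'k fa" where
  "fa_smult c f = (\<lambda>w. c * f w)"

definition fa_diff :: "'k::comm_ring_1 fa \<Rightarrow> 'k fa \<Rightarrow> 'k fa" where
  "fa_diff f g = (\<lambda>w. f w - g w)"

definition par :: "nat \<Rightarrow> nat \<Rightarrow> nat" where
  "par p i = (if i \<le> p then 0 else 1)"

text \<open>Sign in the bracket [a,b]_\<pm> = ab \<pm> (-1)^(p(a)p(b)) ba; pl = True means +.\<close>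
definition brsign :: "bool \<Rightarrow> nat \<Rightarrow> nat \<Rightarrow> nat \<Rightarrow> 'k::comm_ring_1" where
  "brsign pl p i j = (if pl then 1 else -1) * (-1) ^ (par p i * par p j)"

definition bracket :: "bool \<Rightarrow> nat \<Rightarrow> gen \<Rightarrow> nat \<Rightarrow> gen \<Rightarrow> nat \<Rightarrow> 'k::comm_ring_1 fa" where
  "bracket pl p a i b j =
     fa_add (fa_mono [a, b]) (fa_smult (brsign pl p i j) (fa_mono [b, a]))"

text \<open>Defining relations of A^\<pm>_{p|q} (n = p+q), as elements of the free algebra.\<close>
inductive_set rels :: "bool \<Rightarrow> nat \<Rightarrow> nat \<Rightarrow> 'k::comm_ring_1 fa set"
  for pl :: bool and p :: nat and q :: nat where
  rel_DX: "\<lbrakk>1 \<le> i; i \<le> p + q; 1 \<le> j; j \<le> p + q\<rbrakk> \<Longrightarrow>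
     fa_diff (bracket pl p (D i) i (X j) j) (fa_smult (if i = j then 1 else 0) (fa_mono [])) \<in> rels pl p q"
| rel_XX: "\<lbrakk>1 \<le> i; i \<le> p + q; 1 \<le> j; j \<le> p + q\<rbrakk> \<Longrightarrow>
     bracket pl p (X i) i (X j) j \<in> rels pl p q"
| rel_DD: "\<lbrakk>1 \<le> i; i \<le> p + q; 1 \<le> j; j \<le> p + q\<rbrakk> \<Longrightarrow>
     bracket pl p (D i) i (D j) j \<in> rels pl p q"

inductive_set rel_ideal :: "bool \<Rightarrow> nat \<Rightarrow> nat \<Rightarrow> 'k::comm_ring_1 fa set"
  for pl :: bool and p :: nat and q :: nat where
  ideal_zero: "(\<lambda>_. 0) \<in> rel_ideal pl p q"
| ideal_gen: "r \<in> rels pl p q \<Longrightarrow>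
     fa_smult c (fa_mult (fa_mult (fa_mono u) r) (fa_mono v)) \<in> rel_ideal pl p q"
| ideal_add: "\<lbrakk>f \<in> rel_ideal pl p q; g \<in> rel_ideal pl p q\<rbrakk> \<Longrightarrow> fa_add f g \<in> rel_ideal pl p q"

definition gen_idx :: "gen \<Rightarrow> nat" where
  "gen_idx a = (case a of X i \<Rightarrow> i | D i \<Rightarrow> i)"

definition fa_in_range :: "nat \<Rightarrow> 'k::zero fa \<Rightarrow> bool" where
  "fa_in_range n f \<longleftrightarrow> (\<forall>w. f w \<noteq> 0 \<longrightarrow> (\<forall>a\<in>set w. 1 \<le> gen_idx a \<and> gen_idx a \<le> n))"

definition word_deg :: "gen list \<Rightarrow> nat \<Rightarrow> int" where
  "word_deg w i = int (length (filter (\<lambda>a. a = X i) w)) - int (length (filter (\<lambda>a. a = D i) w))"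

definition fa_homog :: "(nat \<Rightarrow> int) \<Rightarrow> 'k::zero fa \<Rightarrow> bool" where
  "fa_homog g f \<longleftrightarrow> (\<forall>w. f w \<noteq> 0 \<longrightarrow> word_deg w = g)"

fun gswap :: "gen \<Rightarrow> gen" where
  "gswap (X i) = D i"
| "gswap (D i) = X i"

definition fa_star :: "'k fa \<Rightarrow> 'k fa" where
  "fa_star f = (\<lambda>w. f (rev (map gswap w)))"

end

theory Submission
  imports Defs "HOL-Library.Function_Algebras" "HOL-Library.Multiset" "HOL-Library.Product_Lexorder"
begin

definition ev :: "nat \<Rightarrow> nat \<Rightarrow> int" where "ev i = (\<lambda>j. if j = i then 1 else 0)"

fun gdeg :: "gen \<Rightarrow> nat \<Rightarrow> int" where
  "gdeg (X i) = ev i" | "gdeg (D i) = - ev i"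

lemma word_deg_Nil[simp]: "word_deg [] = 0"
  by (simp add: word_deg_def fun_eq_iff)

lemma word_deg_Cons[simp]: "word_deg (a#w) = gdeg a + word_deg w"
  by (cases a) (auto simp: word_deg_def fun_eq_iff ev_def)

lemma word_deg_append[simp]: "word_deg (u@v) = word_deg u + word_deg v"
  by (induction u) (auto simp: add.assoc)

definition clif :: "bool \<Rightarrow> nat \<Rightarrow> nat \<Rightarrow> bool" where
  "clif pl p j \<longleftrightarrow> (pl = (par p j = 0))"

definition valid :: "bool \<Rightarrow> nat \<Rightarrow> (nat \<Rightarrow> int) \<Rightarrow> bool" where
  "valid pl p \<alpha> \<longleftrightarrow> (\<forall>j. 0 \<le> \<alpha> j) \<and> (\<forall>j. clif pl p j \<longrightarrow> \<alpha> j \<le> 1) \<and> finite {j. \<alpha> j \<noteq> 0}"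

definition sg :: "bool \<Rightarrow> nat \<Rightarrow> nat \<Rightarrow> (nat \<Rightarrow> int) \<Rightarrow> 'k::comm_ring_1" where
  "sg pl p i \<alpha> = (\<Prod>j<i. (- brsign pl p i j) ^ nat (\<alpha> j))"

fun gact :: "bool \<Rightarrow> nat \<Rightarrow> gen \<Rightarrow> (nat \<Rightarrow> int) \<Rightarrow> 'k::comm_ring_1" where
  "gact pl p (X i) \<alpha> = (if valid pl p \<alpha> \<and> valid pl p (\<alpha> + ev i) then sg pl p i \<alpha> else 0)"
| "gact pl p (D i) \<alpha> = (if valid pl p \<alpha> \<and> valid pl p (\<alpha> - ev i) then of_int (\<alpha> i) * sg pl p i \<alpha> else 0)"

fun act :: "bool \<Rightarrow> nat \<Rightarrow> gen list \<Rightarrow> (nat \<Rightarrow> int) \<Rightarrow> 'k::comm_ring_1" where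
  "act pl p [] \<alpha> = (if valid pl p \<alpha> then 1 else 0)"
| "act pl p (a#w) \<alpha> = gact pl p a (\<alpha> + word_deg w) * act pl p w \<alpha>"

lemma gact_nz: "gact pl p a \<alpha> \<noteq> 0 \<Longrightarrow> valid pl p \<alpha> \<and> valid pl p (\<alpha> + gdeg a)"
  by (cases a) (auto split: if_splits)

lemma act_nz: "act pl p w \<alpha> \<noteq> (0::'k::comm_ring_1) \<Longrightarrow> valid pl p \<alpha> \<and> valid pl p (\<alpha> + word_deg w)"
proof (induction w)
  case Nil then show ?case by (auto split: if_splits)
next
  case (Cons a w)
  then have 1: "gact pl p a (\<alpha> + word_deg w) \<noteq> (0::'k)" and 2: "act pl p w \<alpha> \<noteq> (0::'k)"
    by (auto simp del: gact.simps)
  have "valid pl p \<alpha>" using Cons.IH[OF 2] by blast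
  moreover have "valid pl p (\<alpha> + word_deg (a#w))"
    using gact_nz[OF 1] by (simp add: add_ac)
  ultimately show ?case by blast
qed

lemma act_append: "act pl p (u @ v) \<alpha> = act pl p u (\<alpha> + word_deg v) * (act pl p v \<alpha> :: 'k::comm_ring_1)"
proof (induction u)
  case Nil
  show ?case
  proof (cases "act pl p v \<alpha> = (0::'k)")
    case False
    then have "valid pl p (\<alpha> + word_deg v)" using act_nz by blast
    then show ?thesis by (simp add: plus_fun_def)
  qed simp
next
  case (Cons a u) then show ?case by (simp add: add_ac plus_fun_def)
qed

lemma brsign_sq: "brsign pl p i j * brsign pl p i j = (1::'k::comm_ring_1)"
  by (simp add: brsign_def power_mult_distrib[symmetric] flip: power_add)

lemma brsign_sym: "brsign pl p i j = brsign pl p j i"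
  by (simp add: brsign_def mult.commute)

lemma sg_sq: "sg pl p i \<alpha> * sg pl p i \<alpha> = (1::'k::comm_ring_1)"
  unfolding sg_def prod.distrib[symmetric] power_mult_distrib[symmetric]
  by (rule prod.neutral) (simp add: brsign_sq)

lemma ev_apply[simp]: "ev i j = (if j = i then 1 else 0)"
  by (simp add: ev_def)

lemma plus_ev[simp]: "\<alpha> + ev i = \<alpha>(i := \<alpha> i + 1)"
  by (simp add: fun_eq_iff)
lemma minus_ev[simp]: "\<alpha> - ev i = \<alpha>(i := \<alpha> i - 1)"
  by (simp add: fun_eq_iff)

lemma valid_upd:
  assumes "valid pl p \<alpha>"
  shows "valid pl p (\<alpha>(i := c)) \<longleftrightarrow> 0 \<le> c \<and> (clif pl p i \<longrightarrow> c \<le> 1)"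
proof -
  have "{j. (\<alpha>(i:=c)) j \<noteq> 0} \<subseteq> insert i {j. \<alpha> j \<noteq> 0}" by auto
  then have "finite {j. (\<alpha>(i:=c)) j \<noteq> 0}"
    using assms unfolding valid_def by (meson finite_insert finite_subset)
  then show ?thesis using assms unfolding valid_def
    by auto
qed

lemma sg_upd:
  assumes "0 \<le> \<alpha> j"
  shows "sg pl p i (\<alpha>(j := \<alpha> j + 1)) = (if j < i then - brsign pl p i j else 1) * (sg pl p i \<alpha> :: 'k::comm_ring_1)"
proof (cases "j < i")
  case True
  let ?f = "\<lambda>j'. (- brsign pl p i j') :: 'k"
  have "sg pl p i (\<alpha>(j := \<alpha> j + 1)) = ?f j ^ nat (\<alpha> j + 1) * (\<Prod>j'\<in>{..<i}-{j}. ?f j' ^ nat ((\<alpha>(j := \<alpha> j + 1)) j'))"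
    unfolding sg_def using True by (subst prod.remove[of _ j]) auto
  also have "(\<Prod>j'\<in>{..<i}-{j}. ?f j' ^ nat ((\<alpha>(j := \<alpha> j + 1)) j')) = (\<Prod>j'\<in>{..<i}-{j}. ?f j' ^ nat (\<alpha> j'))"
    by (rule prod.cong) auto
  also have "nat (\<alpha> j + 1) = Suc (nat (\<alpha> j))" using assms by auto
  also have "?f j ^ Suc (nat (\<alpha> j)) * (\<Prod>j'\<in>{..<i}-{j}. ?f j' ^ nat (\<alpha> j')) = ?f j * (?f j ^ nat (\<alpha> j) * (\<Prod>j'\<in>{..<i}-{j}. ?f j' ^ nat (\<alpha> j')))"
    by (simp add: mult.assoc)
  also have "?f j ^ nat (\<alpha> j) * (\<Prod>j'\<in>{..<i}-{j}. ?f j' ^ nat (\<alpha> j')) = sg pl p i \<alpha>"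
    unfolding sg_def using True by (subst (2) prod.remove[of _ j]) auto
  finally show ?thesis using True by (simp add: fun_upd_def)
next
  case False
  then show ?thesis unfolding sg_def by (auto intro!: prod.cong)
qed

lemma sg_upd_minus:
  assumes "1 \<le> \<alpha> j"
  shows "sg pl p i (\<alpha>(j := \<alpha> j - 1)) = (if j < i then - brsign pl p i j else 1) * (sg pl p i \<alpha> :: 'k::comm_ring_1)"
proof -
  let ?b = "\<alpha>(j := \<alpha> j - 1)"
  have e: "\<alpha> = ?b(j := ?b j + 1)" by (simp add: fun_eq_iff)
  have "sg pl p i \<alpha> = (if j < i then - brsign pl p i j else 1) * (sg pl p i ?b :: 'k)"
    by (subst e, rule sg_upd) (use assms in auto)
  then have "(if j < i then - brsign pl p i j else 1) * sg pl p i \<alpha> = (if j < i then - brsign pl p i j else 1) * (if j < i then - brsign pl p i j else 1) * (sg pl p i ?b :: 'k)"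
    by (simp add: mult.assoc)
  then show ?thesis by (simp add: brsign_sq split: if_splits)
qed

lemma sg_same: "sg pl p i (\<alpha>(i := c)) = sg pl p i \<alpha>"
  unfolding sg_def by (auto intro!: prod.cong)

lemma plus_uminus_ev[simp]: "\<alpha> + - ev i = \<alpha>(i := \<alpha> i - 1)"
  by (simp add: fun_eq_iff)

lemma valid_nonneg: "valid pl p \<gamma> \<Longrightarrow> 0 \<le> \<gamma> j"
  by (simp add: valid_def)
lemma valid_clif: "valid pl p \<gamma> \<Longrightarrow> clif pl p j \<Longrightarrow> \<gamma> j \<le> 1"
  by (simp add: valid_def)

lemma brsign_sq'[simp]: "brsign pl p i j * (brsign pl p i j * x) = (x::'k::comm_ring_1)"
  by (simp add: mult.assoc[symmetric] brsign_sq)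

lemma act_invalid: "\<not> valid pl p \<gamma> \<Longrightarrow> act pl p w \<gamma> = (0::'k::comm_ring_1)"
  using act_nz by blast

lemma brsign_diag: "brsign pl p i i = (if clif pl p i then 1 else -1)"
  by (auto simp: brsign_def clif_def par_def)

lemma sg_sq'[simp]: "sg pl p i \<alpha> * (sg pl p i \<alpha> * x) = (x::'k::comm_ring_1)"
  by (simp add: mult.assoc[symmetric] sg_sq)

lemma rel_DX_zero:
  "act pl p [D i, X j] \<gamma> + brsign pl p i j * act pl p [X j, D i] \<gamma> - (if i = j then 1 else 0) * act pl p [] \<gamma> = (0::'k::comm_ring_1)"
proof (cases "valid pl p \<gamma>")
  case False then show ?thesis by (simp add: act_invalid)
next
  case V: True
  have nn: "\<And>j. 0 \<le> \<gamma> j" using V valid_nonneg by blast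
  note sq = sg_sq[of pl p i \<gamma>] sg_sq[of pl p j \<gamma>] brsign_sq[of pl p i j]
  consider "i < j" | "i = j" | "j < i" by linarith
  then show ?thesis
  proof cases
    case 1
    have c: "clif pl p i \<Longrightarrow> \<gamma> i \<le> 1" using V valid_clif by blast
    show ?thesis using 1 V nn c sq
      by (simp add: valid_upd sg_upd sg_upd_minus sg_same brsign_sym, auto simp: algebra_simps brsign_diag sg_sq brsign_sq)
  next
    case 2
    have c: "\<And>j. clif pl p j \<Longrightarrow> \<gamma> j \<le> 1" using V valid_clif by blast
    have "\<gamma> j = 0 \<or> \<gamma> j = 1 \<or> (2 \<le> \<gamma> j \<and> \<not> clif pl p j)" using nn[of j] c[of j] by force
    then show ?thesis using 2 V nn c sq
      apply (elim disjE)
      subgoal by (simp add: valid_upd sg_upd sg_upd_minus sg_same brsign_sym brsign_diag; auto simp: algebra_simps brsign_diag sg_sq brsign_sq)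
      subgoal by (simp add: valid_upd sg_upd sg_upd_minus sg_same brsign_sym brsign_diag; auto simp: algebra_simps brsign_diag sg_sq brsign_sq)
      subgoal by (simp add: valid_upd sg_upd sg_upd_minus sg_same brsign_sym brsign_diag; auto simp: algebra_simps brsign_diag sg_sq brsign_sq)
      done
  next
    case 3
    have c: "\<And>j. clif pl p j \<Longrightarrow> \<gamma> j \<le> 1" using V valid_clif by blast
    show ?thesis using 3 V nn c sq
      by (simp add: valid_upd sg_upd sg_upd_minus sg_same brsign_sym, auto simp: algebra_simps brsign_diag sg_sq brsign_sq)
  qed
qed


lemma rel_XX_zero:
  "act pl p [X i, X j] \<gamma> + brsign pl p i j * act pl p [X j, X i] \<gamma> = (0::'k::comm_ring_1)"
proof (cases "valid pl p \<gamma>")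
  case False then show ?thesis by (simp add: act_invalid)
next
  case V: True
  have nn: "\<And>j. 0 \<le> \<gamma> j" using V valid_nonneg by blast
  note sq = sg_sq[of pl p i \<gamma>] sg_sq[of pl p j \<gamma>] brsign_sq[of pl p i j]
  have c: "\<And>j. clif pl p j \<Longrightarrow> \<gamma> j \<le> 1" using V valid_clif by blast
  consider "i < j" | "i = j" | "j < i" by linarith
  then show ?thesis
  proof cases
    case 1
    show ?thesis using 1 V nn c sq
      by (simp add: valid_upd sg_upd sg_upd_minus sg_same brsign_sym, auto simp: algebra_simps brsign_diag sg_sq brsign_sq)
  next
    case 2
    have "\<gamma> j = 0 \<or> \<gamma> j = 1 \<or> (2 \<le> \<gamma> j \<and> \<not> clif pl p j)" using nn[of j] c[of j] by force
    then show ?thesis using 2 V nn c sq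
      apply (elim disjE)
      subgoal by (simp add: valid_upd sg_upd sg_upd_minus sg_same brsign_sym brsign_diag; auto simp: algebra_simps brsign_diag sg_sq brsign_sq)
      subgoal by (simp add: valid_upd sg_upd sg_upd_minus sg_same brsign_sym brsign_diag; auto simp: algebra_simps brsign_diag sg_sq brsign_sq)
      subgoal by (simp add: valid_upd sg_upd sg_upd_minus sg_same brsign_sym brsign_diag; auto simp: algebra_simps brsign_diag sg_sq brsign_sq)
      done
  next
    case 3
    show ?thesis using 3 V nn c sq
      by (simp add: valid_upd sg_upd sg_upd_minus sg_same brsign_sym)
  qed
qed

lemma rel_DD_zero:
  "act pl p [D i, D j] \<gamma> + brsign pl p i j * act pl p [D j, D i] \<gamma> = (0::'k::comm_ring_1)"
proof (cases "valid pl p \<gamma>")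
  case False then show ?thesis by (simp add: act_invalid)
next
  case V: True
  have nn: "\<And>j. 0 \<le> \<gamma> j" using V valid_nonneg by blast
  note sq = sg_sq[of pl p i \<gamma>] sg_sq[of pl p j \<gamma>] brsign_sq[of pl p i j]
  have c: "\<And>j. clif pl p j \<Longrightarrow> \<gamma> j \<le> 1" using V valid_clif by blast
  consider "i < j" | "i = j" | "j < i" by linarith
  then show ?thesis
  proof cases
    case 1
    show ?thesis using 1 V nn c sq
      by (simp add: valid_upd sg_upd sg_upd_minus sg_same brsign_sym, auto simp: algebra_simps brsign_diag sg_sq brsign_sq)
  next
    case 2
    have "\<gamma> j = 0 \<or> \<gamma> j = 1 \<or> (2 \<le> \<gamma> j \<and> \<not> clif pl p j)" using nn[of j] c[of j] by force
    then show ?thesis using 2 V nn c sq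
      apply (elim disjE)
      subgoal by (simp add: valid_upd sg_upd sg_upd_minus sg_same brsign_sym brsign_diag; auto simp: algebra_simps brsign_diag sg_sq brsign_sq)
      subgoal by (simp add: valid_upd sg_upd sg_upd_minus sg_same brsign_sym brsign_diag; auto simp: algebra_simps brsign_diag sg_sq brsign_sq)
      subgoal by (simp add: valid_upd sg_upd sg_upd_minus sg_same brsign_sym brsign_diag; auto simp: algebra_simps brsign_diag sg_sq brsign_sq)
      done
  next
    case 3
    show ?thesis using 3 V nn c sq
      by (simp add: valid_upd sg_upd sg_upd_minus sg_same brsign_sym, auto simp: algebra_simps brsign_diag sg_sq brsign_sq)
  qed
qed

lemma mult_mono_left: "fa_mult (fa_mono u) f w = (if \<exists>w'. w = u @ w' then f (drop (length u) w) else (0::'k::comm_ring_1))"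
proof -
  have "fa_mult (fa_mono u) f w = (\<Sum>k\<le>length w. if k = length u then (if take (length u) w = u then f (drop (length u) w) else 0) else 0)"
    unfolding fa_mult_def fa_mono_def
    by (rule sum.cong) (auto)
  also have "\<dots> = (if length u \<le> length w \<and> take (length u) w = u then f (drop (length u) w) else 0)"
    by (simp add: sum.delta)
  also have "(length u \<le> length w \<and> take (length u) w = u) = (\<exists>w'. w = u @ w')"
    by (metis append_eq_conv_conj append_take_drop_id length_append le_add1)
  finally show ?thesis .
qed

lemma mult_mono_right: "fa_mult f (fa_mono v) w = (if \<exists>w'. w = w' @ v then f (take (length w - length v) w) else (0::'k::comm_ring_1))"
proof -
  have "fa_mult f (fa_mono v) w = (\<Sum>k\<le>length w. if k = length w - length v then (if length v \<le> length w \<and> drop (length w - length v) w = v then f (take (length w - length v) w) else 0) else 0)"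
    unfolding fa_mult_def fa_mono_def
    by (rule sum.cong) (auto)
  also have "\<dots> = (if length v \<le> length w \<and> drop (length w - length v) w = v then f (take (length w - length v) w) else 0)"
    by (simp add: sum.delta)
  also have "(length v \<le> length w \<and> drop (length w - length v) w = v) = (\<exists>w'. w = w' @ v)"
    by (metis append_take_drop_id diff_diff_cancel diff_le_self length_append length_drop le_add2
        append_eq_conv_conj add_diff_cancel_right')
  finally show ?thesis .
qed

definition gctx :: "gen list \<Rightarrow> 'k::comm_ring_1 fa \<Rightarrow> gen list \<Rightarrow> 'k fa" where
  "gctx u r v = fa_mult (fa_mult (fa_mono u) r) (fa_mono v)"

lemma gctx_app[simp]: "gctx u r v (u @ m @ v) = r m"
  unfolding gctx_def by (simp add: mult_mono_left mult_mono_right)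

lemma gctx_nz: "gctx u r v w \<noteq> 0 \<Longrightarrow> \<exists>m. w = u @ m @ v"
  unfolding gctx_def
  by (auto simp: mult_mono_left mult_mono_right split: if_splits)

lemma gctx_supp: "{w. gctx u r v w \<noteq> 0} = (\<lambda>m. u @ m @ v) ` {m. r m \<noteq> 0}"
  using gctx_nz by fastforce

definition Lf :: "bool \<Rightarrow> nat \<Rightarrow> 'k::comm_ring_1 fa \<Rightarrow> (nat \<Rightarrow> int) \<Rightarrow> 'k" where
  "Lf pl p f \<gamma> = (\<Sum>w\<in>{w. f w \<noteq> 0}. f w * act pl p w \<gamma>)"

lemma Lf_sub: "finite T \<Longrightarrow> {w. f w \<noteq> 0} \<subseteq> T \<Longrightarrow> Lf pl p f \<gamma> = (\<Sum>w\<in>T. f w * act pl p w \<gamma>)"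
  unfolding Lf_def by (rule sum.mono_neutral_left) auto

lemma fin_add: "fa_finite f \<Longrightarrow> fa_finite g \<Longrightarrow> fa_finite (fa_add f g)"
  unfolding fa_finite_def fa_add_def
  by (rule finite_subset[of _ "{w. f w \<noteq> 0} \<union> {w. g w \<noteq> 0}"]) auto
lemma fin_diff: "fa_finite f \<Longrightarrow> fa_finite g \<Longrightarrow> fa_finite (fa_diff f g)"
  unfolding fa_finite_def fa_diff_def
  by (rule finite_subset[of _ "{w. f w \<noteq> 0} \<union> {w. g w \<noteq> 0}"]) auto
lemma fin_smult: "fa_finite f \<Longrightarrow> fa_finite (fa_smult c f)"
  unfolding fa_finite_def fa_smult_def
  by (rule finite_subset[of _ "{w. f w \<noteq> 0}"]) auto
lemma fin_mono: "fa_finite (fa_mono u :: 'k::comm_ring_1 fa)"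
  unfolding fa_finite_def fa_mono_def
  by (rule finite_subset[of _ "{u}"]) auto
lemma fin_zero: "fa_finite (\<lambda>_. 0)"
  unfolding fa_finite_def by simp
lemma fin_gctx: "fa_finite r \<Longrightarrow> fa_finite (gctx u r v)"
  unfolding fa_finite_def gctx_supp by simp

lemma Lf_add: "fa_finite f \<Longrightarrow> fa_finite g \<Longrightarrow> Lf pl p (fa_add f g) \<gamma> = Lf pl p f \<gamma> + Lf pl p g \<gamma>"
proof -
  assume f: "fa_finite f" and g: "fa_finite g"
  let ?T = "{w. f w \<noteq> 0} \<union> {w. g w \<noteq> 0}"
  have T: "finite ?T" using f g by (simp add: fa_finite_def)
  have "Lf pl p (fa_add f g) \<gamma> = (\<Sum>w\<in>?T. fa_add f g w * act pl p w \<gamma>)"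
    by (rule Lf_sub[OF T]) (auto simp: fa_add_def)
  also have "\<dots> = (\<Sum>w\<in>?T. f w * act pl p w \<gamma>) + (\<Sum>w\<in>?T. g w * act pl p w \<gamma>)"
    by (simp add: fa_add_def distrib_right sum.distrib)
  also have "\<dots> = Lf pl p f \<gamma> + Lf pl p g \<gamma>"
    by (simp add: Lf_sub[OF T])
  finally show ?thesis .
qed

lemma Lf_diff: "fa_finite f \<Longrightarrow> fa_finite g \<Longrightarrow> Lf pl p (fa_diff f g) \<gamma> = Lf pl p f \<gamma> - Lf pl p g \<gamma>"
proof -
  assume f: "fa_finite f" and g: "fa_finite g"
  let ?T = "{w. f w \<noteq> 0} \<union> {w. g w \<noteq> 0}"
  have T: "finite ?T" using f g by (simp add: fa_finite_def)
  have "Lf pl p (fa_diff f g) \<gamma> = (\<Sum>w\<in>?T. fa_diff f g w * act pl p w \<gamma>)"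
    by (rule Lf_sub[OF T]) (auto simp: fa_diff_def)
  also have "\<dots> = (\<Sum>w\<in>?T. f w * act pl p w \<gamma>) - (\<Sum>w\<in>?T. g w * act pl p w \<gamma>)"
    by (simp add: fa_diff_def left_diff_distrib sum_subtractf)
  also have "\<dots> = Lf pl p f \<gamma> - Lf pl p g \<gamma>"
    by (simp add: Lf_sub[OF T])
  finally show ?thesis .
qed

lemma Lf_smult: "fa_finite f \<Longrightarrow> Lf pl p (fa_smult c f) \<gamma> = c * Lf pl p f \<gamma>"
proof -
  assume f: "fa_finite f"
  let ?T = "{w. f w \<noteq> 0}"
  have T: "finite ?T" using f by (simp add: fa_finite_def)
  have "Lf pl p (fa_smult c f) \<gamma> = (\<Sum>w\<in>?T. fa_smult c f w * act pl p w \<gamma>)"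
    by (rule Lf_sub[OF T]) (auto simp: fa_smult_def)
  also have "\<dots> = c * Lf pl p f \<gamma>"
    by (simp add: Lf_sub[OF T] fa_smult_def sum_distrib_left mult.assoc)
  finally show ?thesis .
qed

lemma Lf_mono: "Lf pl p (fa_mono u) \<gamma> = act pl p u \<gamma>"
  by (subst Lf_sub[of "{u}"]) (auto simp: fa_mono_def)

lemma Lf_zero: "Lf pl p (\<lambda>_. 0) \<gamma> = 0"
  by (simp add: Lf_def)

definition fdeg :: "(nat \<Rightarrow> int) \<Rightarrow> 'k::zero fa \<Rightarrow> 'k fa" where
  "fdeg d f = (\<lambda>w. if word_deg w = d then f w else 0)"

lemma fin_fdeg: "fa_finite f \<Longrightarrow> fa_finite (fdeg d f)"
  unfolding fa_finite_def fdeg_def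
  by (rule finite_subset[of _ "{w. f w \<noteq> 0}"]) auto

lemma fdeg_homog: "fa_homog d f \<Longrightarrow> fdeg d f = f"
  by (auto simp: fa_homog_def fdeg_def fun_eq_iff)

lemma Lf_gctx:
  fixes r :: "'k::comm_ring_1 fa"
  assumes r: "fa_finite r" and h: "fa_homog d r"
  shows "Lf pl p (gctx u r v) \<gamma> = act pl p u (\<gamma> + word_deg v + d) * act pl p v \<gamma> * Lf pl p r (\<gamma> + word_deg v)"
proof -
  have inj: "inj (\<lambda>m. u @ m @ v)" by (auto intro: injI)
  have "Lf pl p (gctx u r v) \<gamma> = (\<Sum>w\<in>(\<lambda>m. u @ m @ v) ` {m. r m \<noteq> 0}. gctx u r v w * act pl p w \<gamma>)"
    unfolding Lf_def gctx_supp ..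
  also have "\<dots> = (\<Sum>m\<in>{m. r m \<noteq> 0}. r m * act pl p (u @ m @ v) \<gamma>)"
    by (subst sum.reindex) (auto intro: inj_on_subset[OF inj])
  also have "\<dots> = (\<Sum>m\<in>{m. r m \<noteq> 0}. act pl p u (\<gamma> + word_deg v + d) * act pl p v \<gamma> * (r m * act pl p m (\<gamma> + word_deg v)))"
  proof (rule sum.cong[OF refl])
    fix m assume "m \<in> {m. r m \<noteq> 0}"
    then have dm: "word_deg m = d" using h by (auto simp: fa_homog_def)
    have "act pl p (u @ m @ v) \<gamma> = act pl p u (\<gamma> + word_deg (m @ v)) * (act pl p m (\<gamma> + word_deg v) * (act pl p v \<gamma> :: 'k))"
      by (simp only: act_append)
    also have "\<gamma> + word_deg (m @ v) = \<gamma> + word_deg v + d" by (simp add: dm add_ac)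
    finally show "r m * act pl p (u @ m @ v) \<gamma> = act pl p u (\<gamma> + word_deg v + d) * act pl p v \<gamma> * (r m * act pl p m (\<gamma> + word_deg v))"
      by (simp add: mult_ac plus_fun_def)
  qed
  also have "\<dots> = act pl p u (\<gamma> + word_deg v + d) * act pl p v \<gamma> * Lf pl p r (\<gamma> + word_deg v)"
    by (simp add: Lf_def sum_distrib_left)
  finally show ?thesis .
qed

lemma bracket_fin: "fa_finite (bracket pl p a i b j :: 'k::comm_ring_1 fa)"
  unfolding bracket_def by (intro fin_add fin_smult fin_mono)

lemma Lf_bracket: "Lf pl p (bracket pl p a i b j :: 'k::comm_ring_1 fa) \<gamma> = act pl p [a, b] \<gamma> + brsign pl p i j * act pl p [b, a] \<gamma>"
  unfolding bracket_def by (simp add: Lf_add Lf_smult Lf_mono fin_smult fin_mono)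

lemma rels_props:
  fixes r :: "'k::comm_ring_1 fa"
  assumes "r \<in> rels pl p q"
  shows "fa_finite r \<and> (\<exists>d. fa_homog d r) \<and> (\<forall>\<gamma>. Lf pl p r \<gamma> = 0)"
  using assms
proof cases
  case (rel_DX i j)
  have fin: "fa_finite r" unfolding rel_DX by (intro fin_diff bracket_fin fin_smult fin_mono)
  moreover have "fa_homog (word_deg [D i, X j]) r"
    unfolding rel_DX fa_homog_def fa_diff_def bracket_def fa_add_def fa_smult_def fa_mono_def
    by (auto simp: fun_eq_iff split: if_splits)
  moreover have "Lf pl p r \<gamma> = 0" for \<gamma>
    unfolding rel_DX
    using rel_DX_zero[of pl p i j \<gamma>]
    by (simp add: Lf_diff Lf_smult Lf_mono Lf_bracket bracket_fin fin_smult fin_mono)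
  ultimately show ?thesis by blast
next
  case (rel_XX i j)
  have fin: "fa_finite r" unfolding rel_XX by (intro bracket_fin)
  moreover have "fa_homog (word_deg [X i, X j]) r"
    unfolding rel_XX fa_homog_def bracket_def fa_add_def fa_smult_def fa_mono_def
    by (auto simp: fun_eq_iff add_ac split: if_splits)
  moreover have "Lf pl p r \<gamma> = 0" for \<gamma>
    unfolding rel_XX using rel_XX_zero[of pl p i j \<gamma>] by (simp add: Lf_bracket)
  ultimately show ?thesis by blast
next
  case (rel_DD i j)
  have fin: "fa_finite r" unfolding rel_DD by (intro bracket_fin)
  moreover have "fa_homog (word_deg [D i, D j]) r"
    unfolding rel_DD fa_homog_def bracket_def fa_add_def fa_smult_def fa_mono_def
    by (auto simp: fun_eq_iff add_ac split: if_splits)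
  moreover have "Lf pl p r \<gamma> = 0" for \<gamma>
    unfolding rel_DD using rel_DD_zero[of pl p i j \<gamma>] by (simp add: Lf_bracket)
  ultimately show ?thesis by blast
qed

lemma fdeg_add: "fdeg d (fa_add f g) = fa_add (fdeg d f) (fdeg d g)"
  by (auto simp: fdeg_def fa_add_def fun_eq_iff)

lemma ideal_acts_zero:
  fixes f :: "'k::comm_ring_1 fa"
  assumes "f \<in> rel_ideal pl p q"
  shows "fa_finite f \<and> (\<forall>d \<gamma>. Lf pl p (fdeg d f) \<gamma> = 0)"
  using assms
proof induction
  case ideal_zero
  then show ?case by (simp add: fin_zero fdeg_def Lf_zero)
next
  case (ideal_gen r c u v)
  from rels_props[OF ideal_gen] obtain dr where fr: "fa_finite r" and hr: "fa_homog dr r"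
    and zr: "\<And>\<gamma>. Lf pl p r \<gamma> = 0" by blast
  let ?G = "gctx u r v"
  have G: "fa_mult (fa_mult (fa_mono u) r) (fa_mono v) = ?G" by (simp add: gctx_def)
  have fG: "fa_finite ?G" using fr by (rule fin_gctx)
  have hG: "fa_homog (word_deg u + dr + word_deg v) ?G"
    unfolding fa_homog_def
  proof (intro allI impI)
    fix w assume "?G w \<noteq> 0"
    then obtain m where w: "w = u @ m @ v" using gctx_nz by blast
    with \<open>?G w \<noteq> 0\<close> have "r m \<noteq> 0" by simp
    then have "word_deg m = dr" using hr by (simp add: fa_homog_def)
    then show "word_deg w = word_deg u + dr + word_deg v" by (simp add: w add_ac)
  qed
  have "Lf pl p (fdeg d (fa_smult c ?G)) \<gamma> = 0" for d \<gamma>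
  proof (cases "d = word_deg u + dr + word_deg v")
    case True
    then have "fdeg d (fa_smult c ?G) = fa_smult c ?G"
      using hG by (intro fdeg_homog) (simp add: fa_homog_def fa_smult_def, metis mult_zero_right)
    then show ?thesis using fG fr hr
      by (simp add: Lf_smult Lf_gctx zr)
  next
    case False
    then have "fdeg d (fa_smult c ?G) = (\<lambda>_. 0)"
      using hG unfolding fa_homog_def fa_smult_def fdeg_def by (metis mult_zero_right)
    then show ?thesis by (simp add: Lf_zero)
  qed
  then show ?case unfolding G using fG by (simp add: fin_smult)
next
  case (ideal_add f g)
  then show ?case
    by (simp add: fin_add fdeg_add Lf_add fin_fdeg)
qed

section \<open>Multiplication and star\<close>

lemma fa_mult_pairs:
  fixes f h :: "'k::comm_ring_1 fa"
  assumes P: "finite P" and sub: "{x. f x \<noteq> 0} \<times> {y. h y \<noteq> 0} \<subseteq> P"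
  shows "fa_mult f h w = (\<Sum>(x,y)\<in>{(x,y)\<in>P. x @ y = w}. f x * h y)"
proof -
  let ?S = "{(x,y). x @ y = w}"
  have img: "?S = (\<lambda>k. (take k w, drop k w)) ` {..length w}"
  proof (rule set_eqI, rule iffI)
    fix z assume "z \<in> ?S"
    then obtain x y where z: "z = (x,y)" "x @ y = w" by auto
    then show "z \<in> (\<lambda>k. (take k w, drop k w)) ` {..length w}"
      by (intro image_eqI[of _ _ "length x"]) auto
  qed auto
  have inj: "inj_on (\<lambda>k. (take k w, drop k w)) {..length w}"
    by (rule inj_onI) (metis atMost_iff length_take min.absorb2 prod.inject)
  have finS: "finite ?S" unfolding img by simp
  have "fa_mult f h w = (\<Sum>(x,y)\<in>?S. f x * h y)"
    unfolding fa_mult_def img by (subst sum.reindex[OF inj]) simp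
  also have "\<dots> = (\<Sum>(x,y)\<in>{(x,y)\<in>P. x @ y = w}. f x * h y)"
  proof -
    have "(\<Sum>(x,y)\<in>?S. f x * h y) = (\<Sum>(x,y)\<in>?S \<inter> P. f x * h y)"
      by (rule sum.mono_neutral_right[OF finS]) (use sub in auto)
    also have "?S \<inter> P = {(x,y)\<in>P. x @ y = w}" by auto
    finally show ?thesis .
  qed
  finally show ?thesis .
qed

lemma Lf_mult:
  fixes f h :: "'k::comm_ring_1 fa"
  assumes ff: "fa_finite f" and fh: "fa_finite h" and hh: "fa_homog d h"
  shows "Lf pl p (fa_mult f h) \<gamma> = Lf pl p f (\<gamma> + d) * Lf pl p h \<gamma>"
proof -
  let ?P = "{x. f x \<noteq> 0} \<times> {y. h y \<noteq> 0}"
  have P: "finite ?P" using ff fh by (simp add: fa_finite_def)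
  let ?c = "\<lambda>(x,y). x @ y"
  let ?W = "?c ` ?P"
  have W: "finite ?W" using P by simp
  have mp: "\<And>w. fa_mult f h w = (\<Sum>(x,y)\<in>{(x,y)\<in>?P. x @ y = w}. f x * h y)"
    by (rule fa_mult_pairs[OF P]) auto
  have sub: "{w. fa_mult f h w \<noteq> 0} \<subseteq> ?W"
  proof
    fix w assume "w \<in> {w. fa_mult f h w \<noteq> 0}"
    then have nz: "fa_mult f h w \<noteq> 0" by simp
    have "{(x,y)\<in>?P. x @ y = w} \<noteq> {}"
    proof
      assume "{(x,y)\<in>?P. x @ y = w} = {}"
      then have "fa_mult f h w = 0" using mp[of w] by (simp only: sum.empty)
      with nz show False by simp
    qed
    then show "w \<in> ?W" by blast
  qed
  have "Lf pl p (fa_mult f h) \<gamma> = (\<Sum>w\<in>?W. fa_mult f h w * act pl p w \<gamma>)"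
    by (rule Lf_sub[OF W sub])
  also have "\<dots> = (\<Sum>w\<in>?W. \<Sum>z\<in>{z\<in>?P. ?c z = w}. (case z of (x,y) \<Rightarrow> f x * h y) * act pl p (?c z) \<gamma>)"
    by (rule sum.cong[OF refl]) (auto simp: mp sum_distrib_right split_def intro!: sum.cong)
  also have "\<dots> = (\<Sum>z\<in>?P. (case z of (x,y) \<Rightarrow> f x * h y) * act pl p (?c z) \<gamma>)"
    by (rule sum.image_gen[symmetric, OF P])
  also have "\<dots> = (\<Sum>z\<in>?P. (case z of (x,y) \<Rightarrow> (f x * act pl p x (\<gamma> + d)) * (h y * act pl p y \<gamma>)))"
  proof (rule sum.cong[OF refl])
    fix z assume "z \<in> ?P"
    then obtain x y where z: "z = (x,y)" and hy: "h y \<noteq> 0" by auto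
    have dy: "word_deg y = d" using hy hh by (simp add: fa_homog_def)
    show "(case z of (x,y) \<Rightarrow> f x * h y) * act pl p (?c z) \<gamma> = (case z of (x,y) \<Rightarrow> (f x * act pl p x (\<gamma> + d)) * (h y * act pl p y \<gamma>))"
      unfolding z by (simp add: act_append dy mult_ac)
  qed
  also have "\<dots> = (\<Sum>x\<in>{x. f x \<noteq> 0}. f x * act pl p x (\<gamma> + d)) * (\<Sum>y\<in>{y. h y \<noteq> 0}. h y * act pl p y \<gamma>)"
    by (simp add: sum_product sum.cartesian_product)
  finally show ?thesis by (simp add: Lf_def)
qed

definition Nn :: "(nat \<Rightarrow> int) \<Rightarrow> 'k::comm_ring_1" where
  "Nn \<alpha> = (\<Prod>j\<in>{j. \<alpha> j \<noteq> 0}. of_nat (fact (nat (\<alpha> j))))"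

lemma Nn_sub: "finite S \<Longrightarrow> {j. \<alpha> j \<noteq> 0} \<subseteq> S \<Longrightarrow> Nn \<alpha> = (\<Prod>j\<in>S. of_nat (fact (nat (\<alpha> j))) :: 'k::comm_ring_1)"
  unfolding Nn_def by (rule prod.mono_neutral_left) auto

lemma Nn_upd:
  assumes "valid pl p \<gamma>"
  shows "Nn (\<gamma>(i := \<gamma> i + 1)) = (of_int (\<gamma> i) + 1) * (Nn \<gamma> :: 'k::comm_ring_1)"
proof -
  let ?S = "insert i {j. \<gamma> j \<noteq> 0}"
  have S: "finite ?S" using assms by (simp add: valid_def)
  have nn: "0 \<le> \<gamma> i" using assms valid_nonneg by blast
  have "Nn (\<gamma>(i := \<gamma> i + 1)) = (\<Prod>j\<in>?S. of_nat (fact (nat ((\<gamma>(i := \<gamma> i + 1)) j))) :: 'k)"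
    by (rule Nn_sub[OF S]) auto
  also have "\<dots> = of_nat (fact (nat (\<gamma> i + 1))) * (\<Prod>j\<in>?S - {i}. of_nat (fact (nat (\<gamma> j))))"
    using S by (subst prod.remove[of _ i]) (auto intro!: prod.cong)
  also have "of_nat (fact (nat (\<gamma> i + 1))) = (of_int (\<gamma> i) + 1) * (of_nat (fact (nat (\<gamma> i))) :: 'k)"
  proof -
    have "nat (\<gamma> i + 1) = Suc (nat (\<gamma> i))" using nn by auto
    then show ?thesis using nn by (simp add: of_nat_mult algebra_simps)
  qed
  also have "(of_int (\<gamma> i) + 1) * (of_nat (fact (nat (\<gamma> i))) :: 'k) * (\<Prod>j\<in>?S - {i}. of_nat (fact (nat (\<gamma> j))))
     = (of_int (\<gamma> i) + 1) * (\<Prod>j\<in>?S. of_nat (fact (nat (\<gamma> j))))"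
    using S by (subst (2) prod.remove[of _ i]) (auto simp: mult.assoc)
  also have "(\<Prod>j\<in>?S. of_nat (fact (nat (\<gamma> j)))) = (Nn \<gamma> :: 'k)"
    by (rule Nn_sub[symmetric, OF S]) auto
  finally show ?thesis .
qed

lemma gact_adj_X:
  "Nn \<gamma> * gact pl p (D i) (\<gamma>(i := \<gamma> i + 1)) = Nn (\<gamma>(i := \<gamma> i + 1)) * (gact pl p (X i) \<gamma> :: 'k::comm_ring_1)"
proof (cases "valid pl p \<gamma>")
  case False then show ?thesis by simp
next
  case True
  then show ?thesis by (simp add: Nn_upd[OF True] sg_same mult_ac)
qed

fun gswap' :: "gen \<Rightarrow> gen" where "gswap' a = gswap a"

lemma gdeg_gswap[simp]: "gdeg (gswap a) = - gdeg a"
  by (cases a) auto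

lemma gswap_gswap[simp]: "gswap (gswap a) = a"
  by (cases a) auto

lemma gact_adj:
  "Nn \<gamma> * gact pl p (gswap a) (\<gamma> + gdeg a) = Nn (\<gamma> + gdeg a) * (gact pl p a \<gamma> :: 'k::comm_ring_1)"
proof (cases a)
  case (X i) then show ?thesis using gact_adj_X[of \<gamma> pl p i] by simp
next
  case (D i)
  let ?g = "\<gamma>(i := \<gamma> i - 1)"
  have e: "?g(i := ?g i + 1) = \<gamma>" by (simp add: fun_eq_iff)
  have "Nn ?g * gact pl p (D i) (?g(i := ?g i + 1)) = Nn (?g(i := ?g i + 1)) * (gact pl p (X i) ?g :: 'k)"
    by (rule gact_adj_X)
  then show ?thesis using D by (simp only: e) (simp add: mult_ac)
qed

definition starw :: "gen list \<Rightarrow> gen list" where "starw w = rev (map gswap w)"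

lemma starw_starw[simp]: "starw (starw w) = w"
  by (simp add: starw_def rev_map comp_def)

lemma starw_Cons: "starw (a # w) = starw w @ [gswap a]"
  by (simp add: starw_def)

lemma act_adj:
  "Nn \<gamma> * act pl p (starw u) (\<gamma> + word_deg u) = Nn (\<gamma> + word_deg u) * (act pl p u \<gamma> :: 'k::comm_ring_1)"
proof (induction u)
  case Nil
  then show ?case by (simp add: starw_def)
next
  case (Cons a u)
  let ?b = "\<gamma> + word_deg u"
  have e1: "\<gamma> + word_deg (a # u) = ?b + gdeg a" by (simp add: add_ac)
  have e2: "?b + gdeg a + gdeg (gswap a) = ?b" by (simp add: fun_eq_iff)
  have "act pl p (starw (a # u)) (?b + gdeg a) = act pl p (starw u) ?b * (gact pl p (gswap a) (?b + gdeg a) * act pl p [] (?b + gdeg a) :: 'k)"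
    unfolding starw_Cons act_append by (simp only: act.simps word_deg_Cons word_deg_Nil add_0_right e2)
  also have "(gact pl p (gswap a) (?b + gdeg a) * act pl p [] (?b + gdeg a) :: 'k) = gact pl p (gswap a) (?b + gdeg a)"
  proof (cases "gact pl p (gswap a) (?b + gdeg a) = (0::'k)")
    case False
    then have "valid pl p (?b + gdeg a)" using gact_nz by blast
    then show ?thesis by simp
  qed simp
  finally have 1: "act pl p (starw (a # u)) (?b + gdeg a) = act pl p (starw u) ?b * (gact pl p (gswap a) (?b + gdeg a) :: 'k)" .
  have "Nn \<gamma> * act pl p (starw (a # u)) (\<gamma> + word_deg (a # u)) = (Nn \<gamma> * act pl p (starw u) ?b) * (gact pl p (gswap a) (?b + gdeg a) :: 'k)"
    unfolding e1 1 by (simp add: mult_ac)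
  also have "\<dots> = act pl p u \<gamma> * (Nn ?b * gact pl p (gswap a) (?b + gdeg a))"
    unfolding Cons.IH by (simp add: mult_ac)
  also have "\<dots> = act pl p u \<gamma> * (Nn (?b + gdeg a) * gact pl p a ?b)"
    by (simp only: gact_adj)
  also have "\<dots> = Nn (\<gamma> + word_deg (a # u)) * act pl p (a # u) \<gamma>"
    unfolding e1 by (simp add: mult_ac)
  finally show ?case .
qed

lemma word_deg_starw[simp]: "word_deg (starw w) = - word_deg w"
  by (induction w) (auto simp: starw_def)

lemma Nn_nz: "Nn \<alpha> \<noteq> (0::'k::field_char_0)"
proof (cases "finite {j. \<alpha> j \<noteq> 0}")
  case True then show ?thesis unfolding Nn_def by (simp add: prod_zero_iff)
next
  case False then show ?thesis unfolding Nn_def by simp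
qed

lemma fa_star_eq: "fa_star a w = a (starw w)"
  by (simp add: fa_star_def starw_def)

lemma star_supp: "{w. fa_star a w \<noteq> 0} = starw ` {w. a w \<noteq> 0}"
  by (auto simp: fa_star_eq image_iff, metis starw_starw)

lemma fin_star: "fa_finite a \<Longrightarrow> fa_finite (fa_star a)"
  unfolding fa_finite_def star_supp by simp

lemma homog_star: "fa_homog g a \<Longrightarrow> fa_homog (- g) (fa_star a)"
  unfolding fa_homog_def fa_star_eq
  by (metis minus_minus word_deg_starw)

lemma Lf_star: "fa_finite a \<Longrightarrow> Lf pl p (fa_star a) \<beta> = (\<Sum>w\<in>{w. a w \<noteq> 0}. a w * act pl p (starw w) \<beta>)"
proof -
  have inj: "inj starw" by (metis injI starw_starw)
  show ?thesis
    unfolding Lf_def star_supp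
    by (subst sum.reindex) (auto intro: inj_on_subset[OF inj] simp: fa_star_eq)
qed

lemma homog_mult:
  fixes f h :: "'k::comm_ring_1 fa"
  assumes "fa_finite f" "fa_finite h" "fa_homog d1 f" "fa_homog d2 h"
  shows "fa_homog (d1 + d2) (fa_mult f h)"
  unfolding fa_homog_def
proof (intro allI impI)
  fix w assume nz: "fa_mult f h w \<noteq> 0"
  let ?P = "{x. f x \<noteq> 0} \<times> {y. h y \<noteq> 0}"
  have P: "finite ?P" using assms by (simp add: fa_finite_def)
  have mp: "fa_mult f h w = (\<Sum>(x,y)\<in>{(x,y)\<in>?P. x @ y = w}. f x * h y)"
    by (rule fa_mult_pairs[OF P]) auto
  have "{(x,y)\<in>?P. x @ y = w} \<noteq> {}"
  proof
    assume "{(x,y)\<in>?P. x @ y = w} = {}"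
    then have "fa_mult f h w = 0" using mp by (simp only: sum.empty)
    with nz show False by simp
  qed
  then obtain x y where "f x \<noteq> 0" "h y \<noteq> 0" "w = x @ y" by auto
  then show "word_deg w = d1 + d2" using assms(3,4) by (simp add: fa_homog_def)
qed

lemma star_kills:
  fixes a :: "'k::field_char_0 fa"
  assumes fin: "fa_finite a" and hom: "fa_homog g a"
    and I: "fa_mult (fa_star a) a \<in> rel_ideal pl p q"
  shows "Lf pl p a \<gamma> = 0"
proof -
  let ?M = "fa_mult (fa_star a) a"
  have hM: "fa_homog 0 ?M" using homog_mult[OF fin_star[OF fin] fin homog_star[OF hom] hom] by simp
  have "Lf pl p (fdeg 0 ?M) \<gamma> = 0" using ideal_acts_zero[OF I] by blast
  then have "Lf pl p ?M \<gamma> = 0" by (simp add: fdeg_homog[OF hM])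
  then have z: "Lf pl p (fa_star a) (\<gamma> + g) * Lf pl p a \<gamma> = 0"
    by (simp add: Lf_mult[OF fin_star[OF fin] fin hom])
  have "Nn \<gamma> * Lf pl p (fa_star a) (\<gamma> + g) = (\<Sum>w\<in>{w. a w \<noteq> 0}. a w * (Nn \<gamma> * act pl p (starw w) (\<gamma> + word_deg w)))"
    unfolding Lf_star[OF fin] sum_distrib_left
    by (rule sum.cong[OF refl]) (use hom in \<open>auto simp: fa_homog_def mult_ac\<close>)
  also have "\<dots> = (\<Sum>w\<in>{w. a w \<noteq> 0}. a w * (Nn (\<gamma> + g) * act pl p w \<gamma>))"
    by (rule sum.cong[OF refl]) (use hom in \<open>auto simp: fa_homog_def act_adj\<close>)
  also have "\<dots> = Nn (\<gamma> + g) * Lf pl p a \<gamma>"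
    unfolding Lf_def sum_distrib_left by (simp add: mult_ac)
  finally have e: "Nn \<gamma> * Lf pl p (fa_star a) (\<gamma> + g) = Nn (\<gamma> + g) * Lf pl p a \<gamma>" .
  have "Nn (\<gamma> + g) * Lf pl p a \<gamma> * Lf pl p a \<gamma> = Nn \<gamma> * (Lf pl p (fa_star a) (\<gamma> + g) * Lf pl p a \<gamma>)"
    using e by (simp add: mult_ac)
  also have "\<dots> = 0" using z by simp
  finally have "Nn (\<gamma> + g) * (Lf pl p a \<gamma> * Lf pl p a \<gamma>) = 0" by (simp add: mult.assoc)
  then show ?thesis by (metis Nn_nz mult_eq_0_iff)
qed

lemma I_smult: "f \<in> rel_ideal pl p q \<Longrightarrow> fa_smult c f \<in> rel_ideal pl p q"
proof (induction rule: rel_ideal.induct)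
  case ideal_zero
  have "fa_smult c (\<lambda>_. 0) = (\<lambda>_. (0::'a))" by (simp add: fa_smult_def)
  then show ?case by (simp add: rel_ideal.ideal_zero)
next
  case (ideal_gen r c' u v)
  have "fa_smult c (fa_smult c' (fa_mult (fa_mult (fa_mono u) r) (fa_mono v))) = fa_smult (c * c') (fa_mult (fa_mult (fa_mono u) r) (fa_mono v))"
    by (simp add: fa_smult_def mult.assoc)
  then show ?case using rel_ideal.ideal_gen[OF ideal_gen] by simp
next
  case (ideal_add f g)
  have "fa_smult c (fa_add f g) = fa_add (fa_smult c f) (fa_smult c g)"
    by (simp add: fa_smult_def fa_add_def distrib_left)
  then show ?case using rel_ideal.ideal_add[OF ideal_add.IH] by simp
qed

lemma I_diff: "f \<in> rel_ideal pl p q \<Longrightarrow> g \<in> rel_ideal pl p q \<Longrightarrow> fa_diff f g \<in> rel_ideal pl p q"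
proof -
  assume f: "f \<in> rel_ideal pl p q" and g: "g \<in> rel_ideal pl p q"
  have "fa_diff f g = fa_add f (fa_smult (-1) g)" by (simp add: fa_diff_def fa_add_def fa_smult_def)
  then show ?thesis using rel_ideal.ideal_add[OF f I_smult[OF g]] by simp
qed

lemma I_gctx: "r \<in> rels pl p q \<Longrightarrow> gctx u r v \<in> rel_ideal pl p q"
  using rel_ideal.ideal_gen[of r pl p q 1 u v] by (simp add: gctx_def fa_smult_def)

lemma gctx_cases: "gctx u f v w = (if \<exists>m. w = u @ m @ v then f (SOME m. w = u @ m @ v) else 0)"
proof (cases "\<exists>m. w = u @ m @ v")
  case True
  then obtain m where w: "w = u @ m @ v" by blast
  have "(SOME m. w = u @ m @ v) = m"
    by (rule some_equality) (auto simp: w)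
  then show ?thesis using w by simp
next
  case False
  then show ?thesis using gctx_nz by fastforce
qed

lemma gctx_add: "gctx u (fa_add f g) v = fa_add (gctx u f v) (gctx u g v)"
  by (simp add: fun_eq_iff gctx_cases fa_add_def)
lemma gctx_diff: "gctx u (fa_diff f g) v = fa_diff (gctx u f v) (gctx u g v)"
  by (simp add: fun_eq_iff gctx_cases fa_diff_def)
lemma gctx_smult: "gctx u (fa_smult c f) v = fa_smult c (gctx u f v)"
  by (simp add: fun_eq_iff gctx_cases fa_smult_def)
lemma gctx_mono: "gctx u (fa_mono m) v = (fa_mono (u @ m @ v) :: 'k::comm_ring_1 fa)"
proof (rule ext)
  fix w
  show "gctx u (fa_mono m) v w = (fa_mono (u @ m @ v) :: 'k fa) w"
  proof (cases "\<exists>m'. w = u @ m' @ v")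
    case True
    then obtain m' where w: "w = u @ m' @ v" by blast
    then show ?thesis by (simp add: fa_mono_def)
  next
    case False
    then show ?thesis by (auto simp: gctx_cases fa_mono_def)
  qed
qed

lemma gctx_bracket: "gctx u (bracket pl p a i b j) v = fa_add (fa_mono (u @ [a, b] @ v)) (fa_smult (brsign pl p i j) (fa_mono (u @ [b, a] @ v)) :: 'k::comm_ring_1 fa)"
  unfolding bracket_def by (simp add: gctx_add gctx_smult gctx_mono)

definition inr :: "nat \<Rightarrow> gen list \<Rightarrow> bool" where
  "inr n w \<longleftrightarrow> (\<forall>a\<in>set w. 1 \<le> gen_idx a \<and> gen_idx a \<le> n)"

lemma I_XX: "1 \<le> i \<Longrightarrow> i \<le> p + q \<Longrightarrow> 1 \<le> j \<Longrightarrow> j \<le> p + q \<Longrightarrow>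
  fa_add (fa_mono (u @ [X i, X j] @ v)) (fa_smult (brsign pl p i j) (fa_mono (u @ [X j, X i] @ v)) :: 'k::comm_ring_1 fa) \<in> rel_ideal pl p q"
  using I_gctx[OF rels.rel_XX[where i=i and j=j and pl=pl and p=p and q=q], where u=u and v=v] by (simp add: gctx_bracket)

lemma I_DD: "1 \<le> i \<Longrightarrow> i \<le> p + q \<Longrightarrow> 1 \<le> j \<Longrightarrow> j \<le> p + q \<Longrightarrow>
  fa_add (fa_mono (u @ [D i, D j] @ v)) (fa_smult (brsign pl p i j) (fa_mono (u @ [D j, D i] @ v)) :: 'k::comm_ring_1 fa) \<in> rel_ideal pl p q"
  using I_gctx[OF rels.rel_DD[where i=i and j=j and pl=pl and p=p and q=q], where u=u and v=v] by (simp add: gctx_bracket)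

lemma I_DX: "1 \<le> i \<Longrightarrow> i \<le> p + q \<Longrightarrow> 1 \<le> j \<Longrightarrow> j \<le> p + q \<Longrightarrow>
  fa_diff (fa_add (fa_mono (u @ [D i, X j] @ v)) (fa_smult (brsign pl p i j) (fa_mono (u @ [X j, D i] @ v))))
     (fa_smult (if i = j then 1 else 0) (fa_mono (u @ v))) \<in> (rel_ideal pl p q :: 'k::comm_ring_1 fa set)"
  using I_gctx[OF rels.rel_DX[where i=i and j=j and pl=pl and p=p and q=q], where u=u and v=v] by (simp add: gctx_bracket gctx_diff gctx_smult gctx_mono)

section \<open>Normal forms\<close>

lemma gen_idx_simps[simp]: "gen_idx (X i) = i" "gen_idx (D i) = i"
  by (simp_all add: gen_idx_def)

fun key :: "gen \<Rightarrow> nat \<times> nat" where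
  "key (X i) = (0, i)" | "key (D i) = (1, i)"

lemma inj_key: "inj key"
proof (rule injI)
  fix a b assume "key a = key b" then show "a = b" by (cases a; cases b) auto
qed

definition normal :: "bool \<Rightarrow> nat \<Rightarrow> gen list \<Rightarrow> bool" where
  "normal pl p w \<longleftrightarrow> (\<forall>k. Suc k < length w \<longrightarrow>
     key (w!k) < key (w!Suc k) \<or> (w!k = w!Suc k \<and> \<not> clif pl p (gen_idx (w!k))))"

lemma not_normal:
  assumes "\<not> normal pl p w"
  shows "\<exists>u a b v. w = u @ [a, b] @ v \<and> (key b < key a \<or> (a = b \<and> clif pl p (gen_idx a)))"
proof -
  from assms obtain k where k: "Suc k < length w"
    and bad: "\<not> (key (w!k) < key (w!Suc k) \<or> (w!k = w!Suc k \<and> \<not> clif pl p (gen_idx (w!k))))"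
    unfolding normal_def by blast
  have w: "w = take k w @ [w!k, w!Suc k] @ drop (Suc (Suc k)) w"
    using k by (metis Cons_nth_drop_Suc Suc_lessD append_Cons append_Nil append_take_drop_id)
  have "key (w!Suc k) < key (w!k) \<or> (w!k = w!Suc k \<and> clif pl p (gen_idx (w!k)))"
  proof (cases "key (w!k) = key (w!Suc k)")
    case True
    then have "w!k = w!Suc k" using inj_key by (simp add: inj_eq)
    then show ?thesis using bad by auto
  next
    case False
    then show ?thesis using bad by auto
  qed
  then show ?thesis using w by blast
qed

fun inv :: "gen list \<Rightarrow> nat" where
  "inv [] = 0"
| "inv (a # w) = length (filter (\<lambda>b. key b < key a) w) + inv w"

lemma inv_swap: "key b < key a \<Longrightarrow> inv (u @ [b, a] @ v) < inv (u @ [a, b] @ v)"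
proof (induction u)
  case Nil then show ?case by auto
next
  case (Cons c u)
  have "length (filter (\<lambda>x. key x < key c) (u @ [b, a] @ v)) = length (filter (\<lambda>x. key x < key c) (u @ [a, b] @ v))"
    by simp
  then show ?case using Cons by simp
qed

definition red :: "bool \<Rightarrow> nat \<Rightarrow> nat \<Rightarrow> (nat \<Rightarrow> int) \<Rightarrow> 'k::field_char_0 fa \<Rightarrow> bool" where
  "red pl p q d f \<longleftrightarrow> (\<exists>g. fa_finite g \<and> (\<forall>w. g w \<noteq> 0 \<longrightarrow> normal pl p w \<and> word_deg w = d)
      \<and> fa_diff f g \<in> rel_ideal pl p q)"

lemma red_equiv:
  assumes "fa_diff f h \<in> rel_ideal pl p q" "red pl p q d h"
  shows "red pl p q d f"
proof -
  from assms(2) obtain g where g: "fa_finite g" "\<forall>w. g w \<noteq> 0 \<longrightarrow> normal pl p w \<and> word_deg w = d"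
    "fa_diff h g \<in> rel_ideal pl p q" unfolding red_def by blast
  have "fa_diff f g = fa_add (fa_diff f h) (fa_diff h g)"
    by (simp add: fa_diff_def fa_add_def fun_eq_iff)
  then have "fa_diff f g \<in> rel_ideal pl p q" using rel_ideal.ideal_add[OF assms(1) g(3)] by simp
  then show ?thesis using g unfolding red_def by blast
qed

lemma red_add:
  assumes "red pl p q d f1" "red pl p q d f2"
  shows "red pl p q d (fa_add f1 f2)"
proof -
  from assms obtain g1 g2 where g1: "fa_finite g1" "\<forall>w. g1 w \<noteq> 0 \<longrightarrow> normal pl p w \<and> word_deg w = d"
    "fa_diff f1 g1 \<in> rel_ideal pl p q" and g2: "fa_finite g2" "\<forall>w. g2 w \<noteq> 0 \<longrightarrow> normal pl p w \<and> word_deg w = d"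
    "fa_diff f2 g2 \<in> rel_ideal pl p q" unfolding red_def by blast
  have "fa_diff (fa_add f1 f2) (fa_add g1 g2) = fa_add (fa_diff f1 g1) (fa_diff f2 g2)"
    by (simp add: fa_diff_def fa_add_def fun_eq_iff)
  then have "fa_diff (fa_add f1 f2) (fa_add g1 g2) \<in> rel_ideal pl p q"
    using rel_ideal.ideal_add[OF g1(3) g2(3)] by simp
  moreover have "fa_finite (fa_add g1 g2)" using g1 g2 by (simp add: fin_add)
  moreover have "\<forall>w. fa_add g1 g2 w \<noteq> 0 \<longrightarrow> normal pl p w \<and> word_deg w = d"
    using g1(2) g2(2) unfolding fa_add_def by (metis add.right_neutral)
  ultimately show ?thesis unfolding red_def by blast
qed

lemma red_smult:
  assumes "red pl p q d f"
  shows "red pl p q d (fa_smult c f)"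
proof -
  from assms obtain g where g: "fa_finite g" "\<forall>w. g w \<noteq> 0 \<longrightarrow> normal pl p w \<and> word_deg w = d"
    "fa_diff f g \<in> rel_ideal pl p q" unfolding red_def by blast
  have "fa_diff (fa_smult c f) (fa_smult c g) = fa_smult c (fa_diff f g)"
    by (simp add: fa_diff_def fa_smult_def fun_eq_iff right_diff_distrib)
  then have "fa_diff (fa_smult c f) (fa_smult c g) \<in> rel_ideal pl p q"
    using I_smult[OF g(3)] by simp
  moreover have "fa_finite (fa_smult c g)" using g by (simp add: fin_smult)
  moreover have "\<forall>w. fa_smult c g w \<noteq> 0 \<longrightarrow> normal pl p w \<and> word_deg w = d"
    using g(2) by (auto simp: fa_smult_def)
  ultimately show ?thesis unfolding red_def by blast
qed

lemma red_zero: "red pl p q d (\<lambda>_. 0)"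
  unfolding red_def
  by (rule exI[of _ "\<lambda>_. 0"]) (simp add: fin_zero fa_diff_def rel_ideal.ideal_zero)

lemma red_mono_normal: "normal pl p w \<Longrightarrow> red pl p q (word_deg w) (fa_mono w)"
  unfolding red_def
  by (rule exI[of _ "fa_mono w"]) (auto simp: fin_mono fa_diff_def rel_ideal.ideal_zero, auto simp: fa_mono_def split: if_splits)

lemma red_swap:
  fixes w w' :: "gen list" and s :: "'k::field_char_0"
  assumes "fa_add (fa_mono w) (fa_smult s (fa_mono w')) \<in> rel_ideal pl p q"
    and "red pl p q d (fa_mono w' :: 'k fa)"
  shows "red pl p q d (fa_mono w :: 'k fa)"
proof (rule red_equiv)
  have "fa_diff (fa_mono w) (fa_smult (- s) (fa_mono w')) = (fa_add (fa_mono w) (fa_smult s (fa_mono w')) :: 'k fa)"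
    by (simp add: fa_diff_def fa_add_def fa_smult_def fun_eq_iff)
  then show "fa_diff (fa_mono w) (fa_smult (- s) (fa_mono w')) \<in> rel_ideal pl p q" using assms(1) by simp
  show "red pl p q d (fa_smult (- s) (fa_mono w'))" using assms(2) by (rule red_smult)
qed

lemma red_swapDX:
  fixes w w' w'' :: "gen list" and s c :: "'k::field_char_0"
  assumes "fa_diff (fa_add (fa_mono w) (fa_smult s (fa_mono w'))) (fa_smult c (fa_mono w'')) \<in> rel_ideal pl p q"
    and "red pl p q d (fa_mono w' :: 'k fa)"
    and "c \<noteq> 0 \<Longrightarrow> red pl p q d (fa_mono w'' :: 'k fa)"
  shows "red pl p q d (fa_mono w :: 'k fa)"
proof (rule red_equiv)
  let ?h = "fa_add (fa_smult (- s) (fa_mono w')) (fa_smult c (fa_mono w''))"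
  have "fa_diff (fa_mono w) ?h = (fa_diff (fa_add (fa_mono w) (fa_smult s (fa_mono w'))) (fa_smult c (fa_mono w'')) :: 'k fa)"
    by (simp add: fa_diff_def fa_add_def fa_smult_def fun_eq_iff)
  then show "fa_diff (fa_mono w) ?h \<in> rel_ideal pl p q" using assms(1) by simp
  have "red pl p q d (fa_smult c (fa_mono w'') :: 'k fa)"
  proof (cases "c = 0")
    case True
    then have "fa_smult c (fa_mono w'') = (\<lambda>_. 0 :: 'k)" by (simp add: fa_smult_def fun_eq_iff)
    then show ?thesis by (simp add: red_zero)
  next
    case False then show ?thesis using assms(3) red_smult by blast
  qed
  then show "red pl p q d ?h" using red_add red_smult[OF assms(2)] by blast
qed

lemma red_kill:
  fixes w :: "gen list"
  assumes "fa_add (fa_mono w) (fa_smult 1 (fa_mono w)) \<in> (rel_ideal pl p q :: 'k::field_char_0 fa set)"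
  shows "red pl p q d (fa_mono w :: 'k fa)"
proof (rule red_equiv)
  have eq: "fa_diff (fa_mono w) (\<lambda>_. 0) = fa_smult (1/2) (fa_add (fa_mono w) (fa_smult 1 (fa_mono w)) :: 'k fa)"
    by (simp add: fa_diff_def fa_add_def fa_smult_def fun_eq_iff fa_mono_def)
  show "fa_diff (fa_mono w) (\<lambda>_. 0) \<in> (rel_ideal pl p q :: 'k fa set)" using I_smult[OF assms, of "1/2"] eq by metis
  show "red pl p q d (\<lambda>_. 0 :: 'k)" by (rule red_zero)
qed

lemma inr_app: "inr n (u @ v) \<longleftrightarrow> inr n u \<and> inr n v"
  by (auto simp: inr_def)

lemma red_word: "inr (p + q) w \<Longrightarrow> red pl p q (word_deg w) (fa_mono w :: 'k::field_char_0 fa)"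
proof (induction w rule: wf_induct[OF wf_measures[of "[length, inv]"]])
  case (1 w)
  define d where "d = word_deg w"
  have "red pl p q d (fa_mono w :: 'k fa)"
  proof (cases "normal pl p w")
    case True
    have "red pl p q (word_deg w) (fa_mono w :: 'k fa)" by (rule red_mono_normal[OF True])
    then show ?thesis by (simp add: d_def)
  next
    case False
    then obtain u a b v where w: "w = u @ [a, b] @ v"
      and bad: "key b < key a \<or> (a = b \<and> clif pl p (gen_idx a))"
      using not_normal by blast
    have ir: "1 \<le> gen_idx a" "gen_idx a \<le> p + q" "1 \<le> gen_idx b" "gen_idx b \<le> p + q"
      using "1.prems" unfolding w by (auto simp: inr_def)
    have ir2: "inr (p+q) (u @ [b, a] @ v)" "inr (p+q) (u @ v)"
      using "1.prems" unfolding w by (auto simp: inr_def)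
    have IHswap: "key b < key a \<Longrightarrow> red pl p q d (fa_mono (u @ [b, a] @ v) :: 'k fa)"
    proof -
      assume k: "key b < key a"
      have "(u @ [b, a] @ v, w) \<in> measures [length, inv]"
        using inv_swap[OF k, of u v] unfolding w by simp
      moreover have "word_deg (u @ [b, a] @ v) = d" unfolding d_def w by (simp add: add_ac)
      ultimately show ?thesis using "1.IH" ir2(1) by metis
    qed
    have IHdel: "red pl p q (word_deg (u @ v)) (fa_mono (u @ v) :: 'k fa)"
    proof -
      have "(u @ v, w) \<in> measures [length, inv]" unfolding w by simp
      then show ?thesis using "1.IH" ir2(2) by metis
    qed
    show ?thesis
    proof (cases a)
      case (X i) note a = this
      show ?thesis
      proof (cases b)
        case (X j)
        show ?thesis
        proof (cases "key b < key a")
          case True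
          show ?thesis unfolding w a X
            by (rule red_swap[OF I_XX[of i p q j u v pl] IHswap[OF True, unfolded a X]]) (use ir a X in \<open>auto simp: gen_idx_def\<close>)
        next
          case False
          then have ij: "i = j" "clif pl p i" using bad a X by auto
          have "fa_add (fa_mono w) (fa_smult 1 (fa_mono w)) \<in> (rel_ideal pl p q :: 'k fa set)"
            using I_XX[of i p q i u v pl] ir a X ij by (simp add: brsign_diag w)
          then show ?thesis by (rule red_kill)
        qed
      next
        case (D j)
        then show ?thesis using bad a by auto
      qed
    next
      case (D i) note a = this
      show ?thesis
      proof (cases b)
        case (X j)
        have dd: "i = j \<Longrightarrow> word_deg (u @ v) = d" unfolding d_def w a X by (simp add: fun_eq_iff)
        have k: "key b < key a" using a X by simp
        show ?thesis unfolding w a X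
        proof (rule red_swapDX[OF I_DX[of i p q j u v pl] IHswap[OF k, unfolded a X]])
          show "(if i = j then 1 else 0) \<noteq> (0::'k) \<Longrightarrow> red pl p q d (fa_mono (u @ v) :: 'k fa)"
            using IHdel dd by (simp split: if_splits)
        qed (use ir a X in \<open>auto simp: gen_idx_def\<close>)
      next
        case (D j)
        show ?thesis
        proof (cases "key b < key a")
          case True
          show ?thesis unfolding w a D
            by (rule red_swap[OF I_DD[of i p q j u v pl] IHswap[OF True, unfolded a D]]) (use ir a D in \<open>auto simp: gen_idx_def\<close>)
        next
          case False
          then have ij: "i = j" "clif pl p i" using bad a D by auto
          have "fa_add (fa_mono w) (fa_smult 1 (fa_mono w)) \<in> (rel_ideal pl p q :: 'k fa set)"
            using I_DD[of i p q i u v pl] ir a D ij by (simp add: brsign_diag w)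
          then show ?thesis by (rule red_kill)
        qed
      qed
    qed
  qed
  then show ?case by (simp add: d_def)
qed

lemma red_fa:
  fixes a :: "'k::field_char_0 fa"
  assumes fin: "fa_finite a" and rng: "fa_in_range (p + q) a" and hom: "fa_homog g a"
  shows "red pl p q g a"
proof -
  let ?S = "{w. a w \<noteq> 0}"
  have "finite T \<Longrightarrow> T \<subseteq> ?S \<Longrightarrow> red pl p q g (\<lambda>w. if w \<in> T then a w else 0)" for T
  proof (induction T rule: finite_induct)
    case empty
    then show ?case by (simp add: red_zero)
  next
    case (insert x T)
    have ax: "a x \<noteq> 0" using insert by auto
    have dx: "word_deg x = g" using ax hom by (simp add: fa_homog_def)
    have ix: "inr (p + q) x" using ax rng by (simp add: fa_in_range_def inr_def)
    have rx: "red pl p q g (fa_mono x :: 'k fa)" using red_word[OF ix] dx by simp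
    have eq: "(\<lambda>w. if w \<in> insert x T then a w else 0) = fa_add (fa_smult (a x) (fa_mono x)) (\<lambda>w. if w \<in> T then a w else 0)"
      using insert(2) by (auto simp: fun_eq_iff fa_add_def fa_smult_def fa_mono_def)
    show ?case unfolding eq
      by (rule red_add[OF red_smult[OF rx] insert.IH]) (use insert in auto)
  qed
  moreover have "(\<lambda>w. if w \<in> ?S then a w else 0) = a" by (auto simp: fun_eq_iff)
  ultimately show ?thesis using fin by (metis fa_finite_def order_refl)
qed

section \<open>Faithfulness on normal words\<close>

fun isD :: "gen \<Rightarrow> bool" where "isD (X i) = False" | "isD (D i) = True"

lemma normal_sorted: "normal pl p w \<Longrightarrow> sorted (map key w)"
  unfolding normal_def sorted_iff_nth_Suc by (auto simp: less_imp_le)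

lemma sorted_split: "sorted (map key w) \<Longrightarrow> w = filter (\<lambda>a. \<not> isD a) w @ filter isD w"
proof (induction w)
  case Nil then show ?case by simp
next
  case (Cons a w)
  then have sw: "sorted (map key w)" and le: "\<forall>x\<in>set w. key a \<le> key x" by auto
  show ?case
  proof (cases a)
    case (X i) then show ?thesis using Cons.IH[OF sw] by simp
  next
    case (D i)
    have "\<forall>x\<in>set w. isD x"
    proof
      fix x assume "x \<in> set w"
      then have "key (D i) \<le> key x" using le D by auto
      then show "isD x" by (cases x) auto
    qed
    then show ?thesis using D by simp
  qed
qed

lemma filter_eq_sym: "filter ((=) x) w = filter (\<lambda>a. a = x) w"
  by (induction w) auto

lemma word_deg_count: "word_deg w j = int (count (mset w) (X j)) - int (count (mset w) (D j))"
  unfolding word_deg_def count_mset count_list_eq_length_filter filter_eq_sym ..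

lemma normal_Cons: "normal pl p (a # w) \<Longrightarrow> normal pl p w"
  unfolding normal_def by (metis Suc_less_eq length_Cons nth_Cons_Suc)

lemma normal_clif_notin:
  assumes n: "normal pl p (a # w)" and c: "clif pl p (gen_idx a)"
  shows "a \<notin> set w"
proof
  assume "a \<in> set w"
  then obtain m where m: "m < length w" "w ! m = a" by (auto simp: in_set_conv_nth)
  have s: "sorted (map key (a # w))" using normal_sorted[OF n] .
  have w0: "w \<noteq> []" using m by auto
  have "key a \<le> key (w ! 0)" using s w0 by auto
  moreover have "key (w ! 0) \<le> key (w ! m)"
    using sorted_nth_mono[of "map key w" 0 m] s m w0 by (simp add: nth_map)
  ultimately have "key (w ! 0) = key a" using m by auto
  then have "w ! 0 = a" using inj_key by (simp add: inj_eq)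
  moreover have "key ((a # w) ! 0) < key ((a # w) ! Suc 0) \<or> ((a # w) ! 0 = (a # w) ! Suc 0 \<and> \<not> clif pl p (gen_idx ((a # w) ! 0)))"
    using n w0 unfolding normal_def by (metis length_Cons less_Suc_eq_0_disj length_greater_0_conv)
  ultimately show False using c by auto
qed

lemma normal_count: "normal pl p w \<Longrightarrow> clif pl p (gen_idx c) \<Longrightarrow> count (mset w) c \<le> 1"
proof (induction w)
  case Nil then show ?case by simp
next
  case (Cons a w)
  have nw: "normal pl p w" using normal_Cons[OF Cons.prems(1)] .
  show ?case
  proof (cases "a = c")
    case True
    then have "c \<notin> set w" using normal_clif_notin Cons.prems by blast
    then show ?thesis using True by (simp add: count_eq_zero_iff)
  next
    case False
    then show ?thesis using Cons.IH[OF nw Cons.prems(2)] by simp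
  qed
qed

lemma gact_nonzero:
  assumes "valid pl p \<alpha>" "valid pl p (\<alpha> + gdeg a)"
  shows "gact pl p a \<alpha> \<noteq> (0::'k::field_char_0)"
proof -
  have sgnz: "sg pl p i \<alpha> \<noteq> (0::'k)" for i
  proof -
    have "sg pl p i \<alpha> * sg pl p i \<alpha> = (1::'k)" by (rule sg_sq)
    then show ?thesis by auto
  qed
  show ?thesis
  proof (cases a)
    case (X i) then show ?thesis using assms sgnz by simp
  next
    case (D i)
    then have "valid pl p (\<alpha>(i := \<alpha> i - 1))" using assms by simp
    then have "0 \<le> \<alpha> i - 1" using valid_nonneg[of pl p "\<alpha>(i := \<alpha> i - 1)" i] by simp
    then have "of_int (\<alpha> i) \<noteq> (0::'k)" by simp
    then show ?thesis using D assms sgnz by simp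
  qed
qed

lemma act_nonzero:
  "(\<And>k. k \<le> length w \<Longrightarrow> valid pl p (\<gamma> + word_deg (drop k w))) \<Longrightarrow> act pl p w \<gamma> \<noteq> (0::'k::field_char_0)"
proof (induction w)
  case Nil then show ?case using Nil[of 0] by simp
next
  case (Cons a w)
  have 1: "act pl p w \<gamma> \<noteq> (0::'k)"
    by (rule Cons.IH) (use Cons.prems[of "Suc _"] in auto)
  have v1: "valid pl p (\<gamma> + word_deg w)" using Cons.prems[of 1] by (simp add: plus_fun_def)
  have v0: "valid pl p (\<gamma> + word_deg w + gdeg a)" using Cons.prems[of 0] by (simp add: add_ac plus_fun_def)
  have "gact pl p a (\<gamma> + word_deg w) \<noteq> (0::'k)" by (rule gact_nonzero[OF v1 v0])
  then show ?case using 1 by simp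
qed

lemma normal_act_nz:
  assumes n: "normal pl p w"
  shows "act pl p w (\<lambda>j. int (count (mset w) (D j))) \<noteq> (0::'k::field_char_0)"
proof (rule act_nonzero)
  fix k assume "k \<le> length w"
  let ?pre = "take k w" and ?s = "drop k w"
  let ?\<beta> = "\<lambda>j. int (count (mset w) (D j))"
  have mw: "mset w = mset ?pre + mset ?s" by (metis append_take_drop_id mset_append)
  have st: "(?\<beta> + word_deg ?s) j = int (count (mset ?s) (X j)) + int (count (mset ?pre) (D j))" for j
    by (simp add: word_deg_count mw)
  have sorted: "sorted (map key w)" using normal_sorted[OF n] .
  have keys: "\<forall>x\<in>set ?pre. \<forall>y\<in>set ?s. key x \<le> key y"
  proof -
    have "sorted (map key ?pre @ map key ?s)" using sorted by (simp flip: map_append)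
    then show ?thesis by (simp add: sorted_append)
  qed
  have valid: "valid pl p (\<lambda>j. int (count (mset ?s) (X j)) + int (count (mset ?pre) (D j)))"
    unfolding valid_def
  proof (intro conjI allI impI)
    fix j show "0 \<le> int (count (mset ?s) (X j)) + int (count (mset ?pre) (D j))" by simp
  next
    fix j assume c: "clif pl p j"
    show "int (count (mset ?s) (X j)) + int (count (mset ?pre) (D j)) \<le> 1"
    proof (cases "X j \<in> set ?s")
      case True
      have "D j \<notin> set ?pre"
      proof
        assume "D j \<in> set ?pre"
        then have "key (D j) \<le> key (X j)" using keys True by blast
        then show False by simp
      qed
      then have z: "count (mset ?pre) (D j) = 0" by simp
      have "count (mset ?s) (X j) \<le> count (mset w) (X j)" by (simp add: mw)
      moreover have "count (mset w) (X j) \<le> 1" using normal_count[OF n, of "X j"] c by simp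
      ultimately have "count (mset ?s) (X j) \<le> 1" by simp
      then show ?thesis by (simp add: z)
    next
      case False
      then have z: "count (mset ?s) (X j) = 0" by simp
      have "count (mset ?pre) (D j) \<le> count (mset w) (D j)" by (simp add: mw)
      moreover have "count (mset w) (D j) \<le> 1" using normal_count[OF n, of "D j"] c by simp
      ultimately have "count (mset ?pre) (D j) \<le> 1" by simp
      then show ?thesis by (simp add: z)
    qed
  next
    have "{j. int (count (mset ?s) (X j)) + int (count (mset ?pre) (D j)) \<noteq> 0} \<subseteq> gen_idx ` set w"
    proof
      fix j assume "j \<in> {j. int (count (mset ?s) (X j)) + int (count (mset ?pre) (D j)) \<noteq> 0}"
      then have nz: "int (count (mset ?s) (X j)) + int (count (mset ?pre) (D j)) \<noteq> 0" by simp
      have "X j \<in> set ?s \<or> D j \<in> set ?pre"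
      proof (rule ccontr)
        assume "\<not> (X j \<in> set ?s \<or> D j \<in> set ?pre)"
        then have z: "count (mset ?s) (X j) = 0" "count (mset ?pre) (D j) = 0" by auto
        show False using nz by (simp only: z)
      qed
      then have "X j \<in> set w \<or> D j \<in> set w" by (meson in_set_dropD in_set_takeD)
      then show "j \<in> gen_idx ` set w" by (metis gen_idx_simps image_eqI)
    qed
    then show "finite {j. int (count (mset ?s) (X j)) + int (count (mset ?pre) (D j)) \<noteq> 0}"
      by (rule finite_subset) simp
  qed
  have "?\<beta> + word_deg ?s = (\<lambda>j. int (count (mset ?s) (X j)) + int (count (mset ?pre) (D j)))"
    by (rule ext, rule st)
  then show "valid pl p (?\<beta> + word_deg ?s)" using valid by simp
qed

lemma normal_unique:
  assumes n: "normal pl p w" and n0: "normal pl p w0" and deg: "word_deg w = word_deg w0"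
    and sz: "length (filter isD w0) \<le> length (filter isD w)"
    and nz: "act pl p w (\<lambda>j. int (count (mset w0) (D j))) \<noteq> (0::'k::field_char_0)"
  shows "w = w0"
proof -
  let ?b = "\<lambda>j. int (count (mset w0) (D j))"
  let ?xs = "filter (\<lambda>a. \<not> isD a) w" and ?ds = "filter isD w"
  have sp: "w = ?xs @ ?ds" using sorted_split[OF normal_sorted[OF n]] .
  have "act pl p w ?b = act pl p ?xs (?b + word_deg ?ds) * (act pl p ?ds ?b :: 'k)"
    by (subst sp) (rule act_append)
  then have "act pl p ?xs (?b + word_deg ?ds) \<noteq> (0::'k)" using nz by auto
  then have v: "valid pl p (?b + word_deg ?ds)" using act_nz by blast
  have cds: "count (mset ?ds) (X j) = 0" "count (mset ?ds) (D j) = count (mset w) (D j)" for j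
    by (simp_all add: mset_filter)
  have le: "count (mset w) (D j) \<le> count (mset w0) (D j)" for j
  proof -
    have "0 \<le> (?b + word_deg ?ds) j" using valid_nonneg[OF v] .
    then show ?thesis by (simp add: word_deg_count cds)
  qed
  let ?A = "filter_mset isD (mset w)" and ?B = "filter_mset isD (mset w0)"
  have sub: "?A \<subseteq># ?B"
    unfolding subseteq_mset_def
  proof
    fix x show "count ?A x \<le> count ?B x" using le by (cases x) auto
  qed
  have "size ?A = length ?ds" by (simp flip: mset_filter)
  moreover have "size ?B = length (filter isD w0)" by (simp flip: mset_filter)
  ultimately have "?A = ?B" using sub sz mset_subset_size
    by (metis leD subset_mset.le_imp_less_or_eq)
  then have eqD: "count (mset w) (D j) = count (mset w0) (D j)" for j
    by (metis count_filter_mset isD.simps(2))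
  have eqX: "count (mset w) (X j) = count (mset w0) (X j)" for j
  proof -
    have "word_deg w j = word_deg w0 j" using deg by simp
    then show ?thesis by (simp add: word_deg_count eqD)
  qed
  have "mset w = mset w0"
  proof (rule multiset_eqI)
    fix x show "count (mset w) x = count (mset w0) x" by (cases x) (simp_all add: eqX eqD)
  qed
  then have m: "mset (map key w) = mset (map key w0)" by simp
  have "sort (map key w0) = map key w"
    by (rule properties_for_sort[OF m normal_sorted[OF n]])
  moreover have "sort (map key w0) = map key w0" by (rule sorted_sort_id[OF normal_sorted[OF n0]])
  ultimately have "map key w = map key w0" by simp
  then show ?thesis using inj_key by simp
qed

lemma faithful:
  fixes g :: "'k::field_char_0 fa"
  assumes fin: "fa_finite g" and nrm: "\<forall>w. g w \<noteq> 0 \<longrightarrow> normal pl p w \<and> word_deg w = d"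
    and z: "\<And>\<gamma>. Lf pl p g \<gamma> = 0"
  shows "g = (\<lambda>_. 0)"
proof (rule ccontr)
  assume "g \<noteq> (\<lambda>_. 0)"
  then obtain w1 where "g w1 \<noteq> 0" by auto
  let ?S = "{w. g w \<noteq> 0}"
  have S: "finite ?S" using fin by (simp add: fa_finite_def)
  obtain w0 where w0: "w0 \<in> ?S" and mn: "\<And>w. w \<in> ?S \<Longrightarrow> length (filter isD w0) \<le> length (filter isD w)"
    using ex_has_least_nat[of "\<lambda>w. w \<in> ?S" w1 "\<lambda>w. length (filter isD w)"] \<open>g w1 \<noteq> 0\<close> by auto
  let ?b = "\<lambda>j. int (count (mset w0) (D j))"
  have n0: "normal pl p w0" and d0: "word_deg w0 = d" using w0 nrm by auto
  have others: "act pl p w ?b = (0::'k)" if "w \<in> ?S - {w0}" for w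
  proof (rule ccontr)
    assume a: "act pl p w ?b \<noteq> (0::'k)"
    have m: "length (filter isD w0) \<le> length (filter isD w)" using mn that by auto
    have "w = w0"
      by (rule normal_unique[OF _ n0 _ m a]) (use that nrm d0 in auto)
    then show False using that by simp
  qed
  have "Lf pl p g ?b = g w0 * act pl p w0 ?b + (\<Sum>w\<in>?S - {w0}. g w * act pl p w ?b)"
    unfolding Lf_def using S w0 by (rule sum.remove)
  also have "(\<Sum>w\<in>?S - {w0}. g w * act pl p w ?b) = 0"
    using others by simp
  finally have "Lf pl p g ?b = g w0 * act pl p w0 ?b" by simp
  moreover have "g w0 * act pl p w0 ?b \<noteq> 0" using w0 normal_act_nz[OF n0] by simp
  ultimately show False using z by simp
qed

theorem mainTheorem2:
  fixes pl :: bool and p q :: nat and g :: "nat \<Rightarrow> int" and a :: "'k::field_char_0 fa"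
  assumes "alg_closed TYPE('k)"
    and "fa_finite a" and "fa_in_range (p + q) a"
    and "fa_homog g a"
    and "fa_mult (fa_star a) a \<in> rel_ideal pl p q"
  shows "a \<in> rel_ideal pl p q"
proof -
  note fin = assms(2) and rng = assms(3) and hom = assms(4) and I = assms(5)
  have La: "Lf pl p a \<gamma> = 0" for \<gamma> by (rule star_kills[OF fin hom I])
  obtain h where fh: "fa_finite h" and nh: "\<forall>w. h w \<noteq> 0 \<longrightarrow> normal pl p w \<and> word_deg w = g"
    and Dh: "fa_diff a h \<in> rel_ideal pl p q"
    using red_fa[OF fin rng hom, of pl] unfolding red_def by blast
  have hd: "fa_homog g (fa_diff a h)"
    using hom nh unfolding fa_homog_def fa_diff_def by (metis diff_zero diff_self)
  have Lh: "Lf pl p h \<gamma> = 0" for \<gamma>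
  proof -
    have "Lf pl p (fdeg g (fa_diff a h)) \<gamma> = 0" using ideal_acts_zero[OF Dh] by blast
    then have "Lf pl p (fa_diff a h) \<gamma> = 0" by (simp add: fdeg_homog[OF hd])
    then show ?thesis by (simp add: Lf_diff[OF fin fh] La)
  qed
  have "h = (\<lambda>_. 0)" by (rule faithful[OF fh nh Lh])
  then have "fa_diff a h = a" by (simp add: fa_diff_def)
  then show ?thesis using Dh by simp
qed

end
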